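(* Let $\mathcal{M}=(\mathbf A,\perp,\{\mathsf{t},\mathsf{f}\})$ be an $\mathfrak{N}_w$-model and let $x,y$ be distinct propositional variables. Then $h((x\circ y)\Rightarrow(x\Rightarrow y))\perp\mathsf{f}$ for every homomorphism $h$ from the formula algebra into $\mathbf A$ if and only if $\mathbf A$ is trivial (has exactly one element).
   Context: Formulas are built from variables using binary $\otimes,\circ$ and unary ${}^{*}$; in formulas and algebras, $\varphi\Rightarrow\psi:=(\varphi\circ\psi^{*})^{*}$, $\varphi\Leftrightarrow\psi:=(\varphi\Rightarrow\psi)\otimes(\psi\Rightarrow\varphi)$, $\varphi\not\Leftrightarrow\psi:=(\varphi\Leftrightarrow\psi)^{*}$, $\varphi\not\Leftrightarrow\psi\not\Leftrightarrow\chi:=((\varphi\not\Leftrightarrow\psi)\otimes(\varphi\not\Leftrightarrow\chi))\otimes(\psi\not\Leftrightarrow\chi)$. A weak $\mathcal{N}$-algebra is an algebra $(A,\otimes,\circ,{}^{*})$ of type $(2,2,1)$ with $\otimes,\circ$ commutative, $x^{**}=x$, and $(x\otimes y)\circ z=(x\otimes z)\circ y$. With $\mathsf{t}\ne\mathsf{f}$ symbols not in $A$, $\overline A=A\cup\{\mathsf{t},\mathsf{f}\}$, an $\mathfrak{N}_w$-model is $(\mathbf A,\perp,\{\mathsf{t},\mathsf{f}\})$, $\mathbf A$ a weak $\mathcal{N}$-algebra, $\perp\subseteq\overline A\times\overline A$, such that for all $x,y,z\in A$: (a) $x\perp x^{*}$; (b) $x\perp y^{*}$ and $y\perp x^{*}$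 imply $x=y$; (c) $x\perp y$ iff $x\circ y\perp\mathsf{t}$; (d) $x\perp\mathsf{t}$ iff $x^{*}\perp\mathsf{f}$; (e) $x\perp\mathsf{f}$ and $y\perp\mathsf{f}$ iff $x\otimes y\perp\mathsf{f}$; (f) $(x\circ y^{*})^{*}\perp(x\circ y)^{*}$; (g) $x\perp y$ and $x\perp\mathsf{f}$ imply $y\perp\mathsf{t}$; (h) $(x\not\Leftrightarrow y\not\Leftrightarrow z)\perp((x\Rightarrow y)\Rightarrow((y\Rightarrow z)\Rightarrow(x\Rightarrow z)))^{*}$. *)

theory Defs
  imports Main
begin

datatype 'a ext = Elem 'a | T | F

definition imp :: "('a \<Rightarrow> 'a \<Rightarrow> 'a) \<Rightarrow> ('a \<Rightarrow> 'a) \<Rightarrow> 'a \<Rightarrow> 'a \<Rightarrow> 'a" where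
  "imp circ star a b = star (circ a (star b))"

definition iff :: "('a \<Rightarrow> 'a \<Rightarrow> 'a) \<Rightarrow> ('a \<Rightarrow> 'a \<Rightarrow> 'a) \<Rightarrow> ('a \<Rightarrow> 'a) \<Rightarrow> 'a \<Rightarrow> 'a \<Rightarrow> 'a" where
  "iff tens circ star a b = tens (imp circ star a b) (imp circ star b a)"

definition niff :: "('a \<Rightarrow> 'a \<Rightarrow> 'a) \<Rightarrow> ('a \<Rightarrow> 'a \<Rightarrow> 'a) \<Rightarrow> ('a \<Rightarrow> 'a) \<Rightarrow> 'a \<Rightarrow> 'a \<Rightarrow> 'a" where
  "niff tens circ star a b = star (iff tens circ star a b)"

definition niff3 :: "('a \<Rightarrow> 'a \<Rightarrow> 'a) \<Rightarrow> ('a \<Rightarrow> 'a \<Rightarrow> 'a) \<Rightarrow> ('a \<Rightarrow> 'a) \<Rightarrow> 'a \<Rightarrow> 'a \<Rightarrow> 'a \<Rightarrow> 'a" where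
  "niff3 tens circ star a b c =
     tens (tens (niff tens circ star a b) (niff tens circ star a c)) (niff tens circ star b c)"

text \<open>Weak N-algebra on the carrier given by the whole type 'a.\<close>
definition weak_N_algebra :: "('a \<Rightarrow> 'a \<Rightarrow> 'a) \<Rightarrow> ('a \<Rightarrow> 'a \<Rightarrow> 'a) \<Rightarrow> ('a \<Rightarrow> 'a) \<Rightarrow> bool" where
  "weak_N_algebra tens circ star \<longleftrightarrow>
     (\<forall>x y. tens x y = tens y x) \<and>
     (\<forall>x y. circ x y = circ y x) \<and>
     (\<forall>x. star (star x) = x) \<and>
     (\<forall>x y z. circ (tens x y) z = circ (tens x z) y)"

definition Nw_model ::
  "('a \<Rightarrow> 'a \<Rightarrow> 'a) \<Rightarrow> ('a \<Rightarrow> 'a \<Rightarrow> 'a) \<Rightarrow> ('a \<Rightarrow> 'a) \<Rightarrow> ('a ext \<Rightarrow> 'a ext \<Rightarrow> bool) \<Rightarrow> bool" where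
  "Nw_model tens circ star perp \<longleftrightarrow>
     weak_N_algebra tens circ star \<and>
     (\<forall>x. perp (Elem x) (Elem (star x))) \<and>
     (\<forall>x y. perp (Elem x) (Elem (star y)) \<and> perp (Elem y) (Elem (star x)) \<longrightarrow> x = y) \<and>
     (\<forall>x y. perp (Elem x) (Elem y) \<longleftrightarrow> perp (Elem (circ x y)) T) \<and>
     (\<forall>x. perp (Elem x) T \<longleftrightarrow> perp (Elem (star x)) F) \<and>
     (\<forall>x y. (perp (Elem x) F \<and> perp (Elem y) F) \<longleftrightarrow> perp (Elem (tens x y)) F) \<and>
     (\<forall>x y. perp (Elem (star (circ x (star y)))) (Elem (star (circ x y)))) \<and>
     (\<forall>x y. perp (Elem x) (Elem y) \<and> perp (Elem x) F \<longrightarrow> perp (Elem y) T) \<and>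
     (\<forall>x y z. perp (Elem (niff3 tens circ star x y z))
        (Elem (star (imp circ star (imp circ star x y)
                 (imp circ star (imp circ star y z) (imp circ star x z))))))"

datatype 'v form = Var 'v | Tens "'v form" "'v form" | Circ "'v form" "'v form" | Star "'v form"

definition fImp :: "'v form \<Rightarrow> 'v form \<Rightarrow> 'v form" where
  "fImp \<phi> \<psi> = Star (Circ \<phi> (Star \<psi>))"

definition is_hom :: "('a \<Rightarrow> 'a \<Rightarrow> 'a) \<Rightarrow> ('a \<Rightarrow> 'a \<Rightarrow> 'a) \<Rightarrow> ('a \<Rightarrow> 'a) \<Rightarrow> ('v form \<Rightarrow> 'a) \<Rightarrow> bool" where
  "is_hom tens circ star h \<longleftrightarrow>
     (\<forall>\<phi> \<psi>. h (Tens \<phi> \<psi>) = tens (h \<phi>) (h \<psi>)) \<and>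
     (\<forall>\<phi> \<psi>. h (Circ \<phi> \<psi>) = circ (h \<phi>) (h \<psi>)) \<and>
     (\<forall>\<phi>. h (Star \<phi>) = star (h \<phi>))"

end

theory Submission
  imports Defs
begin

lemma main_dir:
  fixes tens circ :: "'a \<Rightarrow> 'a \<Rightarrow> 'a" and star :: "'a \<Rightarrow> 'a"
    and perp :: "'a ext \<Rightarrow> 'a ext \<Rightarrow> bool"
  assumes M: "Nw_model tens circ star perp"
    and hyp: "\<And>a b. perp (Elem (star (circ (circ a b) (star (star (circ a (star b))))))) F"
  shows "(p::'a) = q"
proof -
  note D = M[unfolded Nw_model_def]
  note alg = D[THEN conjunct1]
  note a1 = D[THEN conjunct2, THEN conjunct1]
  note a2 = D[THEN conjunct2, THEN conjunct2, THEN conjunct1]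
  note a3 = D[THEN conjunct2, THEN conjunct2, THEN conjunct2, THEN conjunct1]
  note a4 = D[THEN conjunct2, THEN conjunct2, THEN conjunct2, THEN conjunct2, THEN conjunct1]
  note a5 = D[THEN conjunct2, THEN conjunct2, THEN conjunct2, THEN conjunct2, THEN conjunct2, THEN conjunct1]
  note a6 = D[THEN conjunct2, THEN conjunct2, THEN conjunct2, THEN conjunct2, THEN conjunct2, THEN conjunct2, THEN conjunct1]
  note a7 = D[THEN conjunct2, THEN conjunct2, THEN conjunct2, THEN conjunct2, THEN conjunct2, THEN conjunct2, THEN conjunct2, THEN conjunct1]
  note a8 = D[THEN conjunct2, THEN conjunct2, THEN conjunct2, THEN conjunct2, THEN conjunct2, THEN conjunct2, THEN conjunct2, THEN conjunct2]
  note AL = alg[unfolded weak_N_algebra_def]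
  note al1 = AL[THEN conjunct1]
  note al2 = AL[THEN conjunct2, THEN conjunct1]
  note al3 = AL[THEN conjunct2, THEN conjunct2, THEN conjunct1]
  note al4 = AL[THEN conjunct2, THEN conjunct2, THEN conjunct2]
  have ss: "\<And>x. star (star x) = x" using al3 by blast
  have tc: "\<And>x y. tens x y = tens y x" using al1 by blast
  have cc: "\<And>x y. circ x y = circ y x" using al2 by blast
  have W: "\<And>x y z. circ (tens x y) z = circ (tens x z) y" using al4 by blast
  have pa: "\<And>x. perp (Elem x) (Elem (star x))" using a1 by blast
  have pb: "\<And>x y. perp (Elem x) (Elem (star y)) \<Longrightarrow> perp (Elem y) (Elem (star x)) \<Longrightarrow> x = y"
    using a2 by blast
  have pc: "\<And>x y. perp (Elem x) (Elem y) \<longleftrightarrow> perp (Elem (circ x y)) T" using a3 by blast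
  have pd: "\<And>x. perp (Elem x) T \<longleftrightarrow> perp (Elem (star x)) F" using a4 by blast
  have pe: "\<And>x y. (perp (Elem x) F \<and> perp (Elem y) F) \<longleftrightarrow> perp (Elem (tens x y)) F"
    using a5 by blast
  have pf: "\<And>x y. perp (Elem (star (circ x (star y)))) (Elem (star (circ x y)))" using a6 by blast
  have ph: "\<And>x y z. perp (Elem (niff3 tens circ star x y z))
        (Elem (star (imp circ star (imp circ star x y)
                 (imp circ star (imp circ star y z) (imp circ star x z)))))" using a8 by blast
  define PF where "PF w = perp (Elem w) F" for w
  define PT where "PT w = perp (Elem w) T" for w
  have PFs: "\<And>z. PF (star z) = PT z" using pd unfolding PF_def PT_def by simp
  have I0: "\<And>a b. circ a b = star (circ a (star b))"
  proof -
    fix a b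
    have "perp (Elem (star (circ (circ a b) (circ a (star b))))) F" using hyp[of a b] by (simp add: ss)
    hence "perp (Elem (circ (circ a b) (circ a (star b)))) T" using pd by simp
    hence h1: "perp (Elem (circ a b)) (Elem (circ a (star b)))" using pc by simp
    have h2: "perp (Elem (circ a b)) (Elem (star (star (circ a (star b)))))" using h1 by (simp add: ss)
    show "circ a b = star (circ a (star b))"
      by (rule pb[OF h2 pf])
  qed
  have I: "\<And>a b. circ a (star b) = star (circ a b)"
  proof -
    fix a b show "circ a (star b) = star (circ a b)" using I0[of a "star b"] by (simp add: ss)
  qed
  have perp_iff: "\<And>x y. perp (Elem x) (Elem y) \<longleftrightarrow> y = star x"
  proof
    fix x y assume h: "perp (Elem x) (Elem y)"
    have "circ (star y) (star x) = star (circ (star y) x)" by (rule I)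
    also have "circ (star y) x = circ x (star y)" by (rule cc)
    also have "circ x (star y) = star (circ x y)" by (rule I)
    finally have e: "circ (star y) (star x) = circ x y" by (simp add: ss)
    have "perp (Elem (star y)) (Elem (star x))" using pc h e by simp
    moreover have "perp (Elem x) (Elem (star (star y)))" using h by (simp add: ss)
    ultimately have "x = star y" using pb by blast
    thus "y = star x" by (simp add: ss)
  next
    fix x y assume "y = star x" thus "perp (Elem x) (Elem y)" using pa by simp
  qed
  have PTc: "\<And>u v. PT (circ u v) \<longleftrightarrow> v = star u" using pc perp_iff unfolding PT_def by simp
  have PFc: "\<And>u w. PF (circ u w) \<longleftrightarrow> u = w"
  proof -
    fix u w
    have "PF (circ u w) = PF (star (star (circ u w)))" by (simp add: ss)
    also have "\<dots> = PT (star (circ u w))" by (rule PFs)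
    also have "\<dots> = PT (circ u (star w))" by (simp add: I)
    also have "\<dots> = (star w = star u)" by (rule PTc)
    also have "\<dots> = (u = w)" by (metis ss)
    finally show "PF (circ u w) \<longleftrightarrow> u = w" .
  qed
  have E: "\<And>a b. PF (tens a b) \<longleftrightarrow> PF a \<and> PF b" using pe unfolding PF_def by blast
  have Lsw: "\<And>x y z. tens x y = z \<longleftrightarrow> tens x z = y"
  proof -
    fix x y z
    have "(tens x y = z) = PF (circ (tens x y) z)" by (simp add: PFc)
    also have "\<dots> = PF (circ (tens x z) y)" by (subst W, rule refl)
    also have "\<dots> = (tens x z = y)" by (simp add: PFc)
    finally show "tens x y = z \<longleftrightarrow> tens x z = y" .
  qed
  have L: "\<And>x y. tens x (tens x y) = y" using Lsw by blast
  have qx: "\<And>x w. circ w w = circ (tens x w) (tens x w)"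
  proof -
    fix x w show "circ w w = circ (tens x w) (tens x w)" using W[of x "tens x w" w] by (simp add: L)
  qed
  define e where "e = circ p p"
  have qe: "\<And>u. circ u u = e"
  proof -
    fix u
    have "circ u u = circ (tens (tens u p) u) (tens (tens u p) u)" by (rule qx)
    also have "tens (tens u p) u = p" using L[of u p] tc[of "tens u p" u] by simp
    finally show "circ u u = e" unfolding e_def .
  qed
  have impc: "\<And>a b. imp circ star a b = circ a b" unfolding imp_def by (simp add: I ss)
  have H: "\<And>a b c. niff3 tens circ star a b c = circ (circ a b) (circ (circ b c) (circ a c))"
  proof -
    fix a b c
    have "star (circ (circ a b) (circ (circ b c) (circ a c))) = star (niff3 tens circ star a b c)"
      using ph[of a b c] perp_iff impc by simp
    hence "star (star (circ (circ a b) (circ (circ b c) (circ a c)))) = star (star (niff3 tens circ star a b c))"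
      by simp
    thus "niff3 tens circ star a b c = circ (circ a b) (circ (circ b c) (circ a c))" by (simp add: ss)
  qed
  have niffc: "\<And>a b. niff tens circ star a b = star (tens (circ a b) (circ a b))"
  proof -
    fix a b show "niff tens circ star a b = star (tens (circ a b) (circ a b))"
      unfolding niff_def iff_def impc using cc[of b a] by simp
  qed
  have T3: "\<And>A B. tens (tens A B) A = B"
  proof -
    fix A B show "tens (tens A B) A = B" using tc[of "tens A B" A] L[of A B] by simp
  qed
  have nqq: "\<And>u. niff tens circ star u u = star (tens e e)" using niffc qe by simp
  have N0: "star (tens e e) = e"
  proof -
    have "niff3 tens circ star p p p = circ e (circ e e)" using H qe by simp
    also have "\<dots> = e" using qe by simp
    finally have "tens (tens (niff tens circ star p p) (niff tens circ star p p)) (niff tens circ star p p) = e"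
      unfolding niff3_def .
    hence "niff tens circ star p p = e" using T3 by simp
    thus ?thesis using nqq by simp
  qed
  have PFe: "PF e" unfolding e_def by (simp add: PFc)
  have nqq2: "\<And>u. niff tens circ star u u = e" using nqq N0 by simp
  have sid: "\<And>u. star u = u"
  proof -
    fix u
    have "PF e" unfolding e_def by (simp add: PFc)
    hence "PF (tens e e)" using E by blast
    hence "PF (star (star (tens e e)))" by (simp add: ss)
    hence "PF (star e)" using N0 by simp
    moreover have "star e = circ u (star u)" using I[of u u] qe[of u] by simp
    ultimately have "u = star u" using PFc by simp
    thus "star u = u" by simp
  qed
  have Me: "\<And>a b. circ (circ a b) e = circ a b"
  proof -
    fix a b
    have "niff3 tens circ star a b a = circ (circ a b) (circ (circ a b) e)" using H qe cc[of b a] by simp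
    moreover have "niff3 tens circ star a b a = e"
      unfolding niff3_def nqq2 niffc cc[of b a] by (rule T3)
    ultimately have "circ (circ a b) (circ (circ a b) e) = e" by simp
    hence "PF (circ (circ a b) (circ (circ a b) e))" using PFe by simp
    hence "circ a b = circ (circ a b) e" using PFc by blast
    thus "circ (circ a b) e = circ a b" by simp
  qed
  have "PF (circ p q)"
  proof -
    let ?R = "tens (circ p q) (circ p q)"
    have "niff3 tens circ star p q q = tens (tens ?R ?R) e"
      unfolding niff3_def nqq2 niffc sid ..
    moreover have "niff3 tens circ star p q q = e"
    proof -
      have "niff3 tens circ star p q q = circ (circ p q) (circ e (circ p q))" using H qe by simp
      also have "circ e (circ p q) = circ p q" using cc[of e "circ p q"] Me[of p q] by simp
      finally show ?thesis using qe by simp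
    qed
    ultimately have "tens (tens ?R ?R) e = e" by simp
    hence "tens e (tens ?R ?R) = e" by (simp only: tc[of e "tens ?R ?R"])
    hence "tens e e = tens ?R ?R" using Lsw[of e "tens ?R ?R" e] by blast
    hence "tens ?R ?R = e" using N0 sid[of "tens e e"] by simp
    hence "PF (tens ?R ?R)" using PFe by simp
    thus ?thesis using E by blast
  qed
  thus ?thesis using PFc by blast
qed

theorem proposition4p12:
  fixes tens circ :: "'a \<Rightarrow> 'a \<Rightarrow> 'a" and star :: "'a \<Rightarrow> 'a"
    and perp :: "'a ext \<Rightarrow> 'a ext \<Rightarrow> bool" and x y :: 'v
  assumes "Nw_model tens circ star perp"
    and "x \<noteq> y"
  shows "(\<forall>h :: 'v form \<Rightarrow> 'a. is_hom tens circ star h \<longrightarrow>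
            perp (Elem (h (fImp (Circ (Var x) (Var y)) (fImp (Var x) (Var y))))) F)
         \<longleftrightarrow> card (UNIV :: 'a set) = 1"
proof
  assume A: "\<forall>h :: 'v form \<Rightarrow> 'a. is_hom tens circ star h \<longrightarrow>
            perp (Elem (h (fImp (Circ (Var x) (Var y)) (fImp (Var x) (Var y))))) F"
  have hyp: "perp (Elem (star (circ (circ a b) (star (star (circ a (star b))))))) F" for a b
  proof -
    define v where "v = (\<lambda>z. if z = x then a else b)"
    define h where "h = rec_form v (\<lambda>_ _ p q. tens p q) (\<lambda>_ _ p q. circ p q) (\<lambda>_ p. star p)"
    have "is_hom tens circ star h" unfolding is_hom_def h_def by simp
    hence "perp (Elem (h (fImp (Circ (Var x) (Var y)) (fImp (Var x) (Var y))))) F" using A by blast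
    thus ?thesis unfolding h_def fImp_def v_def using assms(2) by simp
  qed
  have hyp': "\<And>a b. perp (Elem (star (circ (circ a b) (star (star (circ a (star b))))))) F"
    by (rule hyp)
  have all: "p = q" for p q :: 'a
    by (rule main_dir[of tens circ star perp, OF assms(1) hyp'])
  then have U1: "UNIV = {undefined::'a}" by blast
  show "card (UNIV :: 'a set) = 1" by (subst U1) simp
next
  assume "card (UNIV :: 'a set) = 1"
  then obtain a :: 'a where U: "UNIV = {a}" using card_1_singletonE by blast
  have eq: "\<And>z::'a. z = a" using U by blast
  note D = assms(1)[unfolded Nw_model_def]
  have pa: "\<And>x. perp (Elem x) (Elem (star x))" using D[THEN conjunct2, THEN conjunct1] by blast
  have pc: "\<And>x y. perp (Elem x) (Elem y) \<longleftrightarrow> perp (Elem (circ x y)) T"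
    using D[THEN conjunct2, THEN conjunct2, THEN conjunct2, THEN conjunct1] by blast
  have pd: "\<And>x. perp (Elem x) T \<longleftrightarrow> perp (Elem (star x)) F"
    using D[THEN conjunct2, THEN conjunct2, THEN conjunct2, THEN conjunct2, THEN conjunct1] by blast
  have "perp (Elem (circ a (star a))) T" using pa pc by blast
  hence "perp (Elem (star (circ a (star a)))) F" using pd by blast
  hence F: "perp (Elem a) F" using eq[of "star (circ a (star a))"] by simp
  have "perp (Elem z) F" for z using F eq[of z] by simp
  thus "\<forall>h :: 'v form \<Rightarrow> 'a. is_hom tens circ star h \<longrightarrow>
            perp (Elem (h (fImp (Circ (Var x) (Var y)) (fImp (Var x) (Var y))))) F" by blast
qed

end
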